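(* For every $n\geq1$ and every $i\in\{1,\dots,N\}$, $$C^{(n+1)}_{ii}\cdot v=\lambda_i\, C^{(n)}_{ii}\cdot v-G_i\,C^{(n)}_{-i,i}\cdot v-\sum_{k\in I,\ |k|>i}C^{(n)}_{kk}\cdot v.$$
   Context: Let $N\geq1$, $I=\{-N,\dots,-1,1,\dots,N\}$, and for $k\in I$ put $\bar k=0$ if $k>0$, $\bar k=1$ if $k<0$. The Lie superalgebra $\mathfrak{q}(N)$ over $\mathbb{C}$ is spanned by elements $F_{ij}$ ($i,j\in I$) with $F_{-i,-j}=F_{ij}$ (realized as $F_{ij}=E_{ij}+E_{-i,-j}\in\mathfrak{gl}(N|N)$), $F_{ij}$ of parity $\bar\imath+\bar\jmath\bmod 2$, and supercommutator $$[F_{ij}, F_{kl}] = \delta_{kj} F_{il} - (-1)^{(\bar{\imath}+ \bar{\jmath})(\bar{k} + \bar{l})} \delta_{il} F_{kj} + \delta_{k,-j} F_{-i,l} - (-1)^{(\bar{\imath} + \bar{\jmath})(\bar{k} + \bar{l})} \delta_{-i,l} F_{k,-j}.$$ For $n\geq1$ define $C^{(n)}_{ij}\in U(\mathfrak{q}(N))$ by $$C^{(n)}_{ij} = \sum_{k_1,\ldots,k_{n-1}\in I}F_{ik_1} (-1)^{\bar{k}_1} F_{k_1k_2} (-1)^{\bar{k}_2} \cdots F_{k_{n-2}k_{n-1}} (-1)^{\bar{k}_{n-1}} F_{k_{n-1}j}$$ (so $C^{(1)}_{ij}=F_{ij}$). For $i>0$ let $G_i=F_{-i,i}$ $(=F_{i,-i})$.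 Let $V$ be a representation of $\mathfrak{q}(N)$ and $v\in V$ a vector such that $F_{ij}\cdot v=0$ whenever $|i|<|j|$, and $F_{ii}\cdot v=\lambda_i v$ for $i=1,\dots,N$, where $\lambda_1,\dots,\lambda_N\in\mathbb{C}$. *)

theory Defs
  imports Complex_Main
begin

definition Idx :: "nat \<Rightarrow> int set" where
  "Idx N = {k::int. k \<noteq> 0 \<and> \<bar>k\<bar> \<le> int N}"

definition par :: "int \<Rightarrow> nat" where
  "par k = (if k < 0 then 1 else 0)"

definition kdelta :: "int \<Rightarrow> int \<Rightarrow> complex" where
  "kdelta a b = (if a = b then 1 else 0)"

text \<open>A representation of q(N) on a complex vector space V (scalar multiplication sc):
  F i j acts by the linear operator rho i j, with rho (-i) (-j) = rho i j, and
  the operators satisfy the defining supercommutator relations of q(N).\<close>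
definition is_qrep ::
  "nat \<Rightarrow> (complex \<Rightarrow> 'v::ab_group_add \<Rightarrow> 'v) \<Rightarrow> (int \<Rightarrow> int \<Rightarrow> 'v \<Rightarrow> 'v) \<Rightarrow> bool" where
  "is_qrep N sc rho \<longleftrightarrow>
     vector_space sc \<and>
     (\<forall>i\<in>Idx N. \<forall>j\<in>Idx N. Vector_Spaces.linear sc sc (rho i j)) \<and>
     (\<forall>i\<in>Idx N. \<forall>j\<in>Idx N. rho (-i) (-j) = rho i j) \<and>
     (\<forall>i\<in>Idx N. \<forall>j\<in>Idx N. \<forall>k\<in>Idx N. \<forall>l\<in>Idx N. \<forall>w.
        (let s = (-1::complex) ^ ((par i + par j) * (par k + par l)) in
         rho i j (rho k l w) - sc s (rho k l (rho i j w)) =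
           sc (kdelta k j) (rho i l w)
           - sc (s * kdelta i l) (rho k j w)
           + sc (kdelta k (-j)) (rho (-i) l w)
           - sc (s * kdelta (-i) l) (rho k (-j) w)))"

text \<open>Action of C^{(n)}_{ij} (for n \<ge> 1) on a vector:
  C^{(1)}_{ij} = F_{ij},  C^{(n+1)}_{ij} = sum_k F_{ik} (-1)^{bar k} C^{(n)}_{kj}.
  The value for n = 0 is an irrelevant placeholder.\<close>
fun Cact :: "nat \<Rightarrow> (complex \<Rightarrow> 'v::ab_group_add \<Rightarrow> 'v) \<Rightarrow> (int \<Rightarrow> int \<Rightarrow> 'v \<Rightarrow> 'v)
              \<Rightarrow> nat \<Rightarrow> int \<Rightarrow> int \<Rightarrow> 'v \<Rightarrow> 'v" where
  "Cact N sc rho 0 i j w = 0"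
| "Cact N sc rho (Suc 0) i j w = rho i j w"
| "Cact N sc rho (Suc (Suc n)) i j w =
     (\<Sum>k\<in>Idx N. rho i k (sc ((-1) ^ par k) (Cact N sc rho (Suc n) k j w)))"

end

theory Submission imports Defs begin

definition ee :: "int \<Rightarrow> complex" where "ee m = (-1) ^ par m"
definition SS :: "int \<Rightarrow> int \<Rightarrow> int \<Rightarrow> int \<Rightarrow> complex" where
  "SS i j k l = (-1) ^ ((par i + par j) * (par k + par l))"

lemma par_cases: "par k = 0 \<or> par k = 1" by (simp add: par_def)

lemma sgn1: "SS i j k m * SS i j m l = SS i j k l"
  unfolding SS_def par_def by (auto simp: power_add[symmetric] algebra_simps)

lemma sgn2: "ee j * SS i j k j = ee i * SS i j k i"
  unfolding SS_def ee_def par_def by auto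

lemma sgn3: "i \<noteq> 0 \<Longrightarrow> j \<noteq> 0 \<Longrightarrow> ee (-j) * SS i j k (-j) = ee (-i) * SS i j k (-i)"
  unfolding SS_def ee_def par_def by auto


lemma Idx_neg: "i \<in> Idx N \<Longrightarrow> -i \<in> Idx N" by (simp add: Idx_def)
lemma Idx_nz: "i \<in> Idx N \<Longrightarrow> i \<noteq> 0" by (simp add: Idx_def)
lemma Idx_fin: "finite (Idx N)"
  by (rule finite_subset[of _ "{-int N..int N}"]) (auto simp: Idx_def)

locale qrep = vector_space sc for sc :: "complex \<Rightarrow> 'v::ab_group_add \<Rightarrow> 'v" +
  fixes N :: nat and rho :: "int \<Rightarrow> int \<Rightarrow> 'v \<Rightarrow> 'v"
  assumes Q: "is_qrep N sc rho"
begin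

abbreviation C where "C \<equiv> Cact N sc rho"

lemma lin_facts:
  assumes "Vector_Spaces.linear sc sc f"
  shows "f (x + y) = f x + f y" "f (sc c x) = sc c (f x)" "f (x - y) = f x - f y"
    "f 0 = 0" "f (- x) = - f x" "f (sum g A) = (\<Sum>a\<in>A. f (g a))"
proof -
  interpret module_hom sc sc f using assms module_hom_iff_linear by blast
  show "f (x + y) = f x + f y" "f (sc c x) = sc c (f x)" "f (x - y) = f x - f y"
    "f 0 = 0" "f (- x) = - f x" "f (sum g A) = (\<Sum>a\<in>A. f (g a))"
    by (simp_all add: add scale diff neg sum)
qed

lemma rho_lin: "i \<in> Idx N \<Longrightarrow> j \<in> Idx N \<Longrightarrow> Vector_Spaces.linear sc sc (rho i j)"
  using Q by (simp add: is_qrep_def)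

lemma rho_sym: "i \<in> Idx N \<Longrightarrow> j \<in> Idx N \<Longrightarrow> rho (-i) (-j) = rho i j"
  using Q by (simp add: is_qrep_def)

lemma rel: "a \<in> Idx N \<Longrightarrow> b \<in> Idx N \<Longrightarrow> c \<in> Idx N \<Longrightarrow> d \<in> Idx N \<Longrightarrow>
  rho a b (rho c d x) = sc (SS a b c d) (rho c d (rho a b x)) +
    (sc (kdelta c b) (rho a d x) - sc (SS a b c d * kdelta a d) (rho c b x)
     + sc (kdelta c (-b)) (rho (-a) d x) - sc (SS a b c d * kdelta (-a) d) (rho c (-b) x))"
  using Q unfolding is_qrep_def Let_def SS_def
  by (metis (no_types, lifting) diff_eq_eq add.commute)

lemma C_lin: "k \<in> Idx N \<Longrightarrow> l \<in> Idx N \<Longrightarrow> Vector_Spaces.linear sc sc (C (Suc n) k l)"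
proof (induction n arbitrary: k l)
  case 0 then show ?case using rho_lin by simp
next
  case (Suc n)
  have e: "C (Suc (Suc n)) k l = (\<lambda>w. \<Sum>m\<in>Idx N. (rho k m \<circ> (sc (ee m) \<circ> C (Suc n) m l)) w)"
    by (simp add: ee_def fun_eq_iff)
  have L: "\<And>m. m \<in> Idx N \<Longrightarrow> Vector_Spaces.linear sc sc (C (Suc n) m l)" using Suc by auto
  show ?case unfolding Vector_Spaces.linear_iff
  proof (intro conjI allI)
    show "vector_space sc" by (rule vector_space_axioms)
    show "vector_space sc" by (rule vector_space_axioms)
    fix x y
    show "C (Suc (Suc n)) k l (x + y) = C (Suc (Suc n)) k l x + C (Suc (Suc n)) k l y"
      using L rho_lin[OF Suc.prems(1)]
      by (simp add: lin_facts scale_right_distrib sum.distrib)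
  next
    fix c x
    show "C (Suc (Suc n)) k l (sc c x) = sc c (C (Suc (Suc n)) k l x)"
      using L rho_lin[OF Suc.prems(1)]
      by (simp add: lin_facts scale_sum_right mult.commute)
  qed
qed

end
context qrep begin

lemmas Cl = lin_facts[OF C_lin]
lemmas Rl = lin_facts[OF rho_lin]

lemma C_SS: "C (Suc (Suc n)) k l w = (\<Sum>m\<in>Idx N. rho k m (sc (ee m) (C (Suc n) m l w)))"
  by (simp add: ee_def)

lemma delta_sum: "i \<in> Idx N \<Longrightarrow> (\<Sum>m\<in>Idx N. sc (f m * kdelta i m) (g m)) = sc (f i) (g i)"
  by (subst sum.cong[OF refl, where h="\<lambda>m. if m = i then sc (f i) (g i) else 0"])
     (auto simp: kdelta_def Idx_fin)

lemma delta_sum2: "i \<in> Idx N \<Longrightarrow> (\<Sum>m\<in>Idx N. sc (f m * kdelta m i) (g m)) = sc (f i) (g i)"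
  by (subst sum.cong[OF refl, where h="\<lambda>m. if m = i then sc (f i) (g i) else 0"])
     (auto simp: kdelta_def Idx_fin)

lemma comm: "i \<in> Idx N \<Longrightarrow> j \<in> Idx N \<Longrightarrow> k \<in> Idx N \<Longrightarrow> l \<in> Idx N \<Longrightarrow>
  rho i j (C (Suc n) k l w) - sc (SS i j k l) (C (Suc n) k l (rho i j w)) =
    sc (kdelta k j) (C (Suc n) i l w) - sc (SS i j k l * kdelta i l) (C (Suc n) k j w)
     + sc (kdelta k (-j)) (C (Suc n) (-i) l w) - sc (SS i j k l * kdelta (-i) l) (C (Suc n) k (-j) w)"
proof (induction n arbitrary: i j k l w)
  case 0
  then show ?case using rel[of i j k l w] by (simp add: algebra_simps)
next
  case (Suc n)
  note ij = Suc.prems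
  have mi: "-i \<in> Idx N" "-j \<in> Idx N" using ij Idx_neg by auto
  let ?C = "C (Suc n)"
  have pm: "rho i j (rho k m (sc (ee m) (?C m l w))) =
      sc (SS i j k l) (rho k m (sc (ee m) (?C m l (rho i j w))))
      + sc (kdelta k j) (rho i m (sc (ee m) (?C m l w)))
      - sc (ee m * SS i j k m * kdelta i m) (rho k j (?C m l w))
      + sc (kdelta k (-j)) (rho (-i) m (sc (ee m) (?C m l w)))
      - sc (ee m * SS i j k m * kdelta (-i) m) (rho k (-j) (?C m l w))
      + sc (ee m * SS i j k m * kdelta m j) (rho k m (?C i l w))
      - sc (SS i j k l * kdelta i l) (rho k m (sc (ee m) (?C m j w)))
      + sc (ee m * SS i j k m * kdelta m (-j)) (rho k m (?C (-i) l w))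
      - sc (SS i j k l * kdelta (-i) l) (rho k m (sc (ee m) (?C m (-j) w)))" (is "?L m = ?R m") if m: "m \<in> Idx N" for m
  proof -
    have ih: "rho i j (?C m l w) = sc (SS i j m l) (?C m l (rho i j w)) +
      (sc (kdelta m j) (?C i l w) - sc (SS i j m l * kdelta i l) (?C m j w)
     + sc (kdelta m (-j)) (?C (-i) l w) - sc (SS i j m l * kdelta (-i) l) (?C m (-j) w))"
      using Suc.IH[of i j m l w] ij m by (simp add: algebra_simps)
    have "rho i j (rho k m (sc (ee m) (?C m l w))) = sc (ee m) (rho i j (rho k m (?C m l w)))"
      using ij m by (simp add: Rl)
    also have "\<dots> = sc (ee m) (sc (SS i j k m) (rho k m (rho i j (?C m l w))) +
      (sc (kdelta k j) (rho i m (?C m l w)) - sc (SS i j k m * kdelta i m) (rho k j (?C m l w))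
     + sc (kdelta k (-j)) (rho (-i) m (?C m l w)) - sc (SS i j k m * kdelta (-i) m) (rho k (-j) (?C m l w))))"
      using rel[of i j k m "?C m l w"] ij m by simp
    also have "\<dots> = ?R m" unfolding ih
      using ij m mi sgn1[of i j k m l]
      by (simp add: Rl scale_right_distrib scale_right_diff_distrib algebra_simps)
    finally show ?thesis .
  qed
  have fin: "finite (Idx N)" by (rule Idx_fin)
  have "rho i j (C (Suc (Suc n)) k l w) = (\<Sum>m\<in>Idx N. ?L m)"
    unfolding C_SS using ij by (simp add: Rl)
  also have "\<dots> = (\<Sum>m\<in>Idx N. ?R m)" using pm by (rule sum.cong[OF refl])
  also have "\<dots> = sc (SS i j k l) (C (Suc (Suc n)) k l (rho i j w))
      + sc (kdelta k j) (C (Suc (Suc n)) i l w)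
      - sc (ee i * SS i j k i) (rho k j (?C i l w))
      + sc (kdelta k (-j)) (C (Suc (Suc n)) (-i) l w)
      - sc (ee (-i) * SS i j k (-i)) (rho k (-j) (?C (-i) l w))
      + sc (ee j * SS i j k j) (rho k j (?C i l w))
      - sc (SS i j k l * kdelta i l) (C (Suc (Suc n)) k j w)
      + sc (ee (-j) * SS i j k (-j)) (rho k (-j) (?C (-i) l w))
      - sc (SS i j k l * kdelta (-i) l) (C (Suc (Suc n)) k (-j) w)"
    using delta_sum[OF ij(1), of "\<lambda>m. ee m * SS i j k m" "\<lambda>m. rho k j (?C m l w)"]
      delta_sum[OF mi(1), of "\<lambda>m. ee m * SS i j k m" "\<lambda>m. rho k (-j) (?C m l w)"]
      delta_sum2[OF ij(2), of "\<lambda>m. ee m * SS i j k m" "\<lambda>m. rho k m (?C i l w)"]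
      delta_sum2[OF mi(2), of "\<lambda>m. ee m * SS i j k m" "\<lambda>m. rho k m (?C (-i) l w)"]
    by (simp add: sum.distrib sum_subtractf scale_sum_right[symmetric] ee_def)
  finally show ?case
    using sgn2[of j i k] sgn3[of i j k] Idx_nz[OF ij(1)] Idx_nz[OF ij(2)]
    by (simp add: algebra_simps)
qed

end

lemma ee_neg: "m \<noteq> 0 \<Longrightarrow> ee (-m) = - ee m"
  by (simp add: ee_def par_def)

lemma ee_sym_sum:
  assumes "finite A" "0 \<notin> A" "\<And>x. x \<in> A \<Longrightarrow> -x \<in> A"
  shows "(\<Sum>m\<in>A. ee m) = 0"
proof -
  have im: "uminus ` A = A" using assms(3) by force
  have "(\<Sum>m\<in>A. ee m) = (\<Sum>m\<in>uminus ` A. ee m)" using im by simp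
  also have "\<dots> = (\<Sum>m\<in>A. ee (-m))" by (subst sum.reindex) (auto simp: inj_on_def)
  also have "\<dots> = - (\<Sum>m\<in>A. ee m)"
  proof -
    have "(\<Sum>m\<in>A. ee (-m)) = (\<Sum>m\<in>A. - ee m)"
      by (rule sum.cong[OF refl]) (metis assms(2) ee_neg)
    then show ?thesis by (simp add: sum_negf)
  qed
  finally show ?thesis by simp
qed

context qrep begin

lemma vanish:
  assumes hw: "\<And>i j. i \<in> Idx N \<Longrightarrow> j \<in> Idx N \<Longrightarrow> \<bar>i\<bar> < \<bar>j\<bar> \<Longrightarrow> rho i j v = 0"
  shows "k \<in> Idx N \<Longrightarrow> i \<in> Idx N \<Longrightarrow> \<bar>k\<bar> < \<bar>i\<bar> \<Longrightarrow> C (Suc n) k i v = 0"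
proof (induction n arbitrary: k i)
  case 0 then show ?case using hw by simp
next
  case (Suc n)
  have pm: "rho k m (sc (ee m) (C (Suc n) m i v)) = sc (ee m) (if \<bar>i\<bar> \<le> \<bar>m\<bar> then C (Suc n) k i v else 0)"
    if m: "m \<in> Idx N" for m
  proof (cases "\<bar>i\<bar> \<le> \<bar>m\<bar>")
    case True
    have ne: "k \<noteq> i" "-k \<noteq> i" using Suc.prems by auto
    have "rho k m (C (Suc n) m i v) = C (Suc n) k i v"
      using ne comm[of k m m i n v] Suc.prems m True hw[of k m] Idx_nz[OF m]
      by (simp add: kdelta_def Cl)
    then show ?thesis using True m Suc.prems by (simp add: Rl)
  next
    case False
    then show ?thesis using Suc.IH[of m i] Suc.prems m by (simp add: Rl)
  qed
  have "C (Suc (Suc n)) k i v = (\<Sum>m\<in>Idx N. sc (ee m) (if \<bar>i\<bar> \<le> \<bar>m\<bar> then C (Suc n) k i v else 0))"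
    unfolding C_SS using pm by (rule sum.cong[OF refl])
  also have "\<dots> = (\<Sum>m\<in>{m\<in>Idx N. \<bar>i\<bar> \<le> \<bar>m\<bar>}. sc (ee m) (C (Suc n) k i v))"
    by (simp add: if_distrib[of "sc _"] sum.inter_filter[symmetric] Idx_fin cong: if_cong)
  also have "\<dots> = sc (\<Sum>m\<in>{m\<in>Idx N. \<bar>i\<bar> \<le> \<bar>m\<bar>}. ee m) (C (Suc n) k i v)"
    by (simp add: scale_sum_left)
  also have "(\<Sum>m\<in>{m\<in>Idx N. \<bar>i\<bar> \<le> \<bar>m\<bar>}. ee m) = 0"
    by (rule ee_sym_sum) (auto simp: Idx_fin Idx_neg dest: Idx_nz)
  finally show ?case by simp
qed

end

context qrep begin

lemma mainloc:
  assumes hw: "\<And>i j. i \<in> Idx N \<Longrightarrow> j \<in> Idx N \<Longrightarrow> \<bar>i\<bar> < \<bar>j\<bar> \<Longrightarrow> rho i j v = 0"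
    and wt: "\<And>i. 1 \<le> i \<Longrightarrow> i \<le> int N \<Longrightarrow> rho i i v = sc (lam i) v"
    and i: "1 \<le> i" "i \<le> int N"
  shows "C (Suc (Suc n)) i i v =
           sc (lam i) (C (Suc n) i i v)
           - rho (-i) i (C (Suc n) (-i) i v)
           - (\<Sum>k\<in>{k\<in>Idx N. \<bar>k\<bar> > i}. C (Suc n) k k v)"
proof -
  have iI: "i \<in> Idx N" "-i \<in> Idx N" using i by (auto simp: Idx_def)
  have pi: "par i = 0" "par (-i) = 1" using i by (auto simp: par_def)
  let ?X = "C (Suc n) i i v"
  have pm: "rho i m (sc (ee m) (C (Suc n) m i v)) =
     (if m = i then sc (lam i) ?X else 0) + (if m = -i then - rho (-i) i (C (Suc n) (-i) i v) else 0)
     + (if i < \<bar>m\<bar> then sc (ee m) ?X - C (Suc n) m m v else 0)" if m: "m \<in> Idx N" for m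
  proof -
    have L: "rho i m (sc (ee m) (C (Suc n) m i v)) = sc (ee m) (rho i m (C (Suc n) m i v))"
      using iI m by (simp add: Rl)
    consider "m = i" | "m = -i" | "\<bar>m\<bar> < i" | "i < \<bar>m\<bar>" by linarith
    then show ?thesis
    proof cases
      case 1
      have "rho i i (C (Suc n) i i v) = sc (lam i) ?X"
        using comm[of i i i i n v] iI i wt[OF i] by (simp add: kdelta_def SS_def Cl)
      then show ?thesis using 1 L pi i by (simp add: ee_def)
    next
      case 2
      have "rho i (-i) = rho (-i) i" using rho_sym[OF iI(2) iI(1)] by simp
      then show ?thesis using 2 L pi i by (simp add: ee_def)
    next
      case 3
      then have "C (Suc n) m i v = 0" using vanish[OF hw, of m i n] m iI by simp
      moreover have "m \<noteq> i" "m \<noteq> -i" using 3 by auto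
      ultimately show ?thesis using 3 iI m i by (simp add: Rl)
    next
      case 4
      have s: "SS i m m i = ee m" using pi by (simp add: SS_def ee_def par_def)
      have ee2: "ee m * ee m = 1" by (simp add: ee_def par_def)
      have "rho i m (C (Suc n) m i v) = ?X - sc (ee m) (C (Suc n) m m v)"
        using comm[of i m m i n v] iI m 4 hw[of i m] Idx_nz[OF m] i s
        by (simp add: kdelta_def Cl)
      moreover have "m \<noteq> i" "m \<noteq> -i" using 4 i by auto
      ultimately show ?thesis using 4 L i ee2 by (simp add: scale_right_diff_distrib)
    qed
  qed
  have fin: "finite (Idx N)" by (rule Idx_fin)
  have "C (Suc (Suc n)) i i v = (\<Sum>m\<in>Idx N. (if m = i then sc (lam i) ?X else 0) + (if m = -i then - rho (-i) i (C (Suc n) (-i) i v) else 0)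
     + (if i < \<bar>m\<bar> then sc (ee m) ?X - C (Suc n) m m v else 0))"
    unfolding C_SS using pm by (rule sum.cong[OF refl])
  also have "\<dots> = sc (lam i) ?X - rho (-i) i (C (Suc n) (-i) i v)
      + (\<Sum>m\<in>{m\<in>Idx N. i < \<bar>m\<bar>}. sc (ee m) ?X - C (Suc n) m m v)"
    using iI fin by (simp add: sum.distrib sum.inter_filter)
  also have "(\<Sum>m\<in>{m\<in>Idx N. i < \<bar>m\<bar>}. sc (ee m) ?X - C (Suc n) m m v)
      = sc (\<Sum>m\<in>{m\<in>Idx N. i < \<bar>m\<bar>}. ee m) ?X - (\<Sum>m\<in>{m\<in>Idx N. i < \<bar>m\<bar>}. C (Suc n) m m v)"
    by (simp add: sum_subtractf scale_sum_left)
  also have "(\<Sum>m\<in>{m\<in>Idx N. i < \<bar>m\<bar>}. ee m) = 0"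
    by (rule ee_sym_sum) (auto simp: Idx_fin Idx_neg dest: Idx_nz)
  finally show ?thesis by simp
qed

end

theorem mainTheorem5:
  fixes N :: nat
    and sc :: "complex \<Rightarrow> 'v::ab_group_add \<Rightarrow> 'v"
    and rho :: "int \<Rightarrow> int \<Rightarrow> 'v \<Rightarrow> 'v"
    and v :: 'v
    and lam :: "int \<Rightarrow> complex"
  assumes "N \<ge> 1"
    and "is_qrep N sc rho"
    and "\<And>i j. i \<in> Idx N \<Longrightarrow> j \<in> Idx N \<Longrightarrow> \<bar>i\<bar> < \<bar>j\<bar> \<Longrightarrow> rho i j v = 0"
    and "\<And>i. 1 \<le> i \<Longrightarrow> i \<le> int N \<Longrightarrow> rho i i v = sc (lam i) v"
    and "n \<ge> 1"
    and "1 \<le> i" and "i \<le> int N"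
  shows "Cact N sc rho (n + 1) i i v =
           sc (lam i) (Cact N sc rho n i i v)
           - rho (-i) i (Cact N sc rho n (-i) i v)
           - (\<Sum>k\<in>{k\<in>Idx N. \<bar>k\<bar> > i}. Cact N sc rho n k k v)"
proof -
  interpret qrep sc N rho
    using assms(2) by unfold_locales (simp_all add: is_qrep_def vector_space_def)
  obtain n' where n: "n = Suc n'" using assms(5) by (cases n) auto
  show ?thesis using mainloc[OF assms(3) assms(4) assms(6) assms(7), of n'] n by simp
qed

end
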